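(* A function $f:\Omega_D\to\mathbb{O}$ is both slice Fueter-regular and slice regular if and only if it is constant.
   Context: Octonions $\mathbb{O}=\mathbb{H}+\ell\mathbb{H}$ (Cayley–Dickson product $(a+\ell b)(c+\ell d)=(ac-d\bar b)+\ell(\bar a d+cb)$), identified with $\mathbb{R}^8$; $\mathbb{S}=\{I\in\mathbb{O}:I^2=-1\}$. $D\subset\mathbb{R}^2$ is a non-empty open set invariant under $(x_0,x_1)\mapsto(x_0,-x_1)$, $\Omega_D=\{x_0+x_1I:(x_0,x_1)\in D,I\in\mathbb{S}\}$, assumed connected. A stem function is $F=(F_1,F_2):D\to\mathbb{O}^2$ with $F_1$ even and $F_2$ odd in $x_1$; it induces the slice function $f(x_0+x_1I)=F_1(x_0,x_1)+IF_2(x_0,x_1)$. A slice function is slice regular if its stem function $F$ is $C^1$ and $\frac{\partial F_1}{\partial x_0}=\frac{\partial F_2}{\partial x_1}$, $\frac{\partial F_1}{\partial x_1}=-\frac{\partial F_2}{\partial x_0}$ on $D$. Let $E=\{(x_0,x_1,x_2,x_3):(x_0,(x_1^2+x_2^2+x_3^2)^{1/2})\in D\}$, $\mathcal N=\{(I,J)\in\mathbb{S}^2:I\perp J\}$, and let $O(3)$ be the real orthogonal $4\times4$ matrices fixing the first basis vector, acting on $\mathbb{R}^4$, $\mathbb{O}^4$ by matrix–column multiplication. $f:\Omega_D\to\mathbb{O}$ is slice Fueter-regular if there is $\mathcal F=(\mathcal F_0,\dots,\mathcal F_3):E\to\mathbb{O}^4$ of class $C^1$ with $\mathcal F(Av)=A\mathcal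 F(v)$ ($A\in O(3)$), $f(x_0+x_1I+x_2J+x_3(IJ))=\mathcal F_0(v)+I\mathcal F_1(v)+J\mathcal F_2(v)+(IJ)\mathcal F_3(v)$ for all $v=(x_0,\dots,x_3)\in E$, $(I,J)\in\mathcal N$, and $\partial_0\mathcal F_0-\partial_1\mathcal F_1-\partial_2\mathcal F_2-\partial_3\mathcal F_3=0$, $\partial_1\mathcal F_0+\partial_0\mathcal F_1-\partial_3\mathcal F_2+\partial_2\mathcal F_3=0$, $\partial_2\mathcal F_0+\partial_3\mathcal F_1+\partial_0\mathcal F_2-\partial_1\mathcal F_3=0$, $\partial_3\mathcal F_0-\partial_2\mathcal F_1+\partial_1\mathcal F_2+\partial_0\mathcal F_3=0$ on $E$. *)

theory Defs
  imports "HOL-Analysis.Analysis"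
begin

text \<open>A quaternion q = q1 + q2 i + q3 j + q4 k is a vector in real^4 with components
  q$1,...,q$4 (real part first).\<close>

type_synonym quat = "real^4"

definition qmul :: "quat \<Rightarrow> quat \<Rightarrow> quat" where
  "qmul p q = vector
     [p$1*q$1 - p$2*q$2 - p$3*q$3 - p$4*q$4,
      p$1*q$2 + p$2*q$1 + p$3*q$4 - p$4*q$3,
      p$1*q$3 - p$2*q$4 + p$3*q$1 + p$4*q$2,
      p$1*q$4 + p$2*q$3 - p$3*q$2 + p$4*q$1]"

definition qcnj :: "quat \<Rightarrow> quat" where
  "qcnj p = vector [p$1, - p$2, - p$3, - p$4]"

text \<open>An octonion a + l b (a, b quaternions) is the pair (a, b); this identifies O with R^8
  (the product of two copies of real^4, a Euclidean space).\<close>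

type_synonym octo = "quat \<times> quat"

definition omul :: "octo \<Rightarrow> octo \<Rightarrow> octo" (infixl "\<odot>" 70) where
  "omul x y = (case x of (a, b) \<Rightarrow> case y of (c, d) \<Rightarrow>
      (qmul a c - qmul d (qcnj b), qmul (qcnj a) d + qmul c b))"

definition oone :: octo where
  "oone = (vector [1, 0, 0, 0], 0)"

definition imag_units :: "octo set" where
  "imag_units = {I. I \<odot> I = - oone}"

definition OmegaD :: "(real \<times> real) set \<Rightarrow> octo set" where
  "OmegaD D = {x0 *\<^sub>R oone + x1 *\<^sub>R I | x0 x1 I. (x0, x1) \<in> D \<and> I \<in> imag_units}"

text \<open>C^1 on an open set: differentiable at every point, with the derivative depending
  continuously on the point (tested on each direction vector; in finite dimension this is
  continuity of the derivative).\<close>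
definition C1_on :: "'a::euclidean_space set \<Rightarrow> ('a \<Rightarrow> 'b::real_normed_vector) \<Rightarrow> bool" where
  "C1_on S F \<longleftrightarrow> (\<forall>p\<in>S. F differentiable (at p)) \<and>
      (\<forall>v. continuous_on S (\<lambda>p. frechet_derivative F (at p) v))"

definition pd0 :: "(real \<times> real \<Rightarrow> 'b::real_normed_vector) \<Rightarrow> real \<times> real \<Rightarrow> 'b" where
  "pd0 F p = frechet_derivative F (at p) (1, 0)"
definition pd1 :: "(real \<times> real \<Rightarrow> 'b::real_normed_vector) \<Rightarrow> real \<times> real \<Rightarrow> 'b" where
  "pd1 F p = frechet_derivative F (at p) (0, 1)"

text \<open>Partial derivatives for functions on R^4 = real^4; coordinate x_k is v$(k+1),
  so the partial derivative with respect to x_k is in direction axis (k+1) 1.\<close>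
definition pd4 :: "(real^4 \<Rightarrow> 'b::real_normed_vector) \<Rightarrow> 4 \<Rightarrow> real^4 \<Rightarrow> 'b" where
  "pd4 F k v = frechet_derivative F (at v) (axis k 1)"

definition stem_function :: "(real \<times> real) set \<Rightarrow> (real \<times> real \<Rightarrow> octo) \<Rightarrow> (real \<times> real \<Rightarrow> octo) \<Rightarrow> bool" where
  "stem_function D F1 F2 \<longleftrightarrow>
     (\<forall>x0 x1. (x0, x1) \<in> D \<longrightarrow> F1 (x0, - x1) = F1 (x0, x1) \<and> F2 (x0, - x1) = - F2 (x0, x1))"

definition induces :: "(real \<times> real) set \<Rightarrow> (real \<times> real \<Rightarrow> octo) \<Rightarrow> (real \<times> real \<Rightarrow> octo) \<Rightarrow> (octo \<Rightarrow> octo) \<Rightarrow> bool" where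
  "induces D F1 F2 f \<longleftrightarrow>
     (\<forall>x0 x1 I. (x0, x1) \<in> D \<longrightarrow> I \<in> imag_units \<longrightarrow>
        f (x0 *\<^sub>R oone + x1 *\<^sub>R I) = F1 (x0, x1) + I \<odot> F2 (x0, x1))"

definition slice_regular :: "(real \<times> real) set \<Rightarrow> (octo \<Rightarrow> octo) \<Rightarrow> bool" where
  "slice_regular D f \<longleftrightarrow>
     (\<exists>F1 F2. stem_function D F1 F2 \<and> induces D F1 F2 f \<and>
        C1_on D (\<lambda>p. (F1 p, F2 p)) \<and>
        (\<forall>p\<in>D. pd0 F1 p = pd1 F2 p \<and> pd1 F1 p = - pd0 F2 p))"

definition Eset :: "(real \<times> real) set \<Rightarrow> (real^4) set" where
  "Eset D = {v. (v$1, sqrt ((v$2)\<^sup>2 + (v$3)\<^sup>2 + (v$4)\<^sup>2)) \<in> D}"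

definition Nset :: "(octo \<times> octo) set" where
  "Nset = {(I, J). I \<in> imag_units \<and> J \<in> imag_units \<and> inner I J = 0}"

definition O3 :: "(real^4^4) set" where
  "O3 = {A. orthogonal_matrix A \<and> A *v axis 1 1 = axis 1 1}"

definition mat_act :: "real^4^4 \<Rightarrow> octo^4 \<Rightarrow> octo^4" where
  "mat_act A w = (\<chi> i. \<Sum>j\<in>UNIV. (A $ i $ j) *\<^sub>R (w $ j))"

definition slice_fueter_regular :: "(real \<times> real) set \<Rightarrow> (octo \<Rightarrow> octo) \<Rightarrow> bool" where
  "slice_fueter_regular D f \<longleftrightarrow>
     (\<exists>\<F> :: real^4 \<Rightarrow> octo^4.
        C1_on (Eset D) \<F> \<and>
        (\<forall>A\<in>O3. \<forall>v\<in>Eset D. \<F> (A *v v) = mat_act A (\<F> v)) \<and>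
        (\<forall>v\<in>Eset D. \<forall>(I, J)\<in>Nset.
            f (v$1 *\<^sub>R oone + v$2 *\<^sub>R I + v$3 *\<^sub>R J + v$4 *\<^sub>R (I \<odot> J))
            = \<F> v $ 1 + I \<odot> (\<F> v $ 2) + J \<odot> (\<F> v $ 3) + (I \<odot> J) \<odot> (\<F> v $ 4)) \<and>
        (let F = (\<lambda>k v. \<F> v $ k) in
         \<forall>v\<in>Eset D.
           pd4 (F 1) 1 v - pd4 (F 2) 2 v - pd4 (F 3) 3 v - pd4 (F 4) 4 v = 0 \<and>
           pd4 (F 1) 2 v + pd4 (F 2) 1 v - pd4 (F 3) 4 v + pd4 (F 4) 3 v = 0 \<and>
           pd4 (F 1) 3 v + pd4 (F 2) 4 v + pd4 (F 3) 1 v - pd4 (F 4) 2 v = 0 \<and>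
           pd4 (F 1) 4 v - pd4 (F 2) 3 v + pd4 (F 3) 2 v + pd4 (F 4) 1 v = 0))"

end

theory Submission
  imports Defs
begin


lemma vector4 [simp]:
 "(vector [x,y,z,w] ::('a::zero)^4)$1 = x"
 "(vector [x,y,z,w] ::('a::zero)^4)$2 = y"
 "(vector [x,y,z,w] ::('a::zero)^4)$3 = z"
 "(vector [x,y,z,w] ::('a::zero)^4)$4 = w"
  unfolding vector_def by simp_all

lemma qmul_c [simp]:
 "qmul p q $1 = p$1*q$1 - p$2*q$2 - p$3*q$3 - p$4*q$4"
 "qmul p q $2 = p$1*q$2 + p$2*q$1 + p$3*q$4 - p$4*q$3"
 "qmul p q $3 = p$1*q$3 - p$2*q$4 + p$3*q$1 + p$4*q$2"
 "qmul p q $4 = p$1*q$4 + p$2*q$3 - p$3*q$2 + p$4*q$1"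
  by (simp_all add: qmul_def)

lemma qcnj_c [simp]:
 "qcnj p $1 = p$1" "qcnj p $2 = - p$2" "qcnj p $3 = - p$3" "qcnj p $4 = - p$4"
  by (simp_all add: qcnj_def)

lemma q_eq: "(p::quat) = q \<longleftrightarrow> p$1 = q$1 \<and> p$2 = q$2 \<and> p$3 = q$3 \<and> p$4 = q$4"
  by (simp add: vec_eq_iff forall_4)

lemma inner4: "inner (p::quat) q = p$1*q$1 + p$2*q$2 + p$3*q$3 + p$4*q$4"
  by (simp add: inner_vec_def sum_4)

lemma oone_c [simp]: "fst oone $1 = 1" "fst oone $2 = 0" "fst oone $3 = 0" "fst oone $4 = 0" "snd oone = 0"
  by (simp_all add: oone_def)

lemma omul_fst: "fst (x \<odot> y) = qmul (fst x) (fst y) - qmul (snd y) (qcnj (snd x))"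
  by (simp add: omul_def split: prod.splits)
lemma omul_snd: "snd (x \<odot> y) = qmul (qcnj (fst x)) (snd y) + qmul (fst y) (snd x)"
  by (simp add: omul_def split: prod.splits)

lemma o_eq: "(x::octo) = y \<longleftrightarrow> fst x = fst y \<and> snd x = snd y"
  by (simp add: prod_eq_iff)

lemma inner8: "inner (x::octo) y = inner (fst x) (fst y) + inner (snd x) (snd y)"
  by (cases x; cases y) (simp add: inner_Pair)

lemma imag_units_iff: "I \<in> imag_units \<longleftrightarrow> fst I $1 = 0 \<and> inner I I = 1"
proof -
  obtain a b where I: "I = (a,b)" by (cases I)
  have "I \<in> imag_units \<longleftrightarrow>
     a$1*a$1 - a$2*a$2 - a$3*a$3 - a$4*a$4 - (b$1*b$1 + b$2*b$2 + b$3*b$3 + b$4*b$4) = -1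
     \<and> 2*a$1*a$2 = 0 \<and> 2*a$1*a$3 = 0 \<and> 2*a$1*a$4 = 0
     \<and> 2*a$1*b$1 = 0 \<and> 2*a$1*b$2 = 0 \<and> 2*a$1*b$3 = 0 \<and> 2*a$1*b$4 = 0"
    unfolding imag_units_def I
    by (simp add: o_eq omul_fst omul_snd q_eq algebra_simps)
  also have "\<dots> \<longleftrightarrow> a$1 = 0 \<and> a$1*a$1 + a$2*a$2 + a$3*a$3 + a$4*a$4 + (b$1*b$1 + b$2*b$2 + b$3*b$3 + b$4*b$4) = 1"
  proof (cases "a$1 = 0")
    case True then show ?thesis by auto
  next
    case False
    have "a$1*a$1 \<ge> 0" by simp
    then show ?thesis using False by (smt (verit) mult_eq_0_iff)
  qed
  finally show ?thesis by (simp add: I inner8 inner4)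
qed

lemma re_mul: "fst I $1 = 0 \<Longrightarrow> fst J $1 = 0 \<Longrightarrow> fst (I \<odot> J) $1 = - inner I J"
  by (simp add: omul_fst inner8 inner4 algebra_simps)

lemma inner_I_IJ: "fst I $1 = 0 \<Longrightarrow> fst J $1 = 0 \<Longrightarrow> inner I (I \<odot> J) = 0"
  by (simp add: omul_fst omul_snd inner8 inner4 algebra_simps)

lemma inner_J_IJ: "fst I $1 = 0 \<Longrightarrow> fst J $1 = 0 \<Longrightarrow> inner J (I \<odot> J) = 0"
  by (simp add: omul_fst omul_snd inner8 inner4 algebra_simps)

lemma sq_imag: "fst x $1 = 0 \<Longrightarrow> x \<odot> x = - (inner x x) *\<^sub>R oone"
  by (simp add: o_eq q_eq omul_fst omul_snd inner8 inner4 algebra_simps)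

lemma norm_mul: "inner (I \<odot> J) (I \<odot> J) = inner I I * inner J J"
  by (simp add: omul_fst omul_snd inner8 inner4 algebra_simps)

definition rot3 :: "real \<Rightarrow> real^4^4" where
  "rot3 t = vector [vector [1,0,0,0], vector [0, cos t, - sin t, 0], vector [0, sin t, cos t, 0], vector [0,0,0,1]]"
definition rot4 :: "real \<Rightarrow> real^4^4" where
  "rot4 t = vector [vector [1,0,0,0], vector [0, cos t, 0, - sin t], vector [0, 0, 1, 0], vector [0, sin t, 0, cos t]]"

lemma mat_eq4: "(A::real^4^4) = B \<longleftrightarrow> (\<forall>i j. A$i$j = B$i$j)"
  by (simp add: vec_eq_iff)

lemma rot3_O3: "rot3 t \<in> O3"
  unfolding O3_def orthogonal_matrix_def
  by (simp add: rot3_def mat_eq4 forall_4 matrix_matrix_mult_def transpose_def mat_def sum_4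
      matrix_vector_mult_def vec_eq_iff axis_def algebra_simps flip: power2_eq_square)

lemma rot4_O3: "rot4 t \<in> O3"
  unfolding O3_def orthogonal_matrix_def
  by (simp add: rot4_def mat_eq4 forall_4 matrix_matrix_mult_def transpose_def mat_def sum_4
      matrix_vector_mult_def vec_eq_iff axis_def algebra_simps flip: power2_eq_square)



lemma four_scale: "(4::real) *\<^sub>R (Z::'a::real_vector) = Z + Z + Z + Z"
proof -
  have "(4::real) *\<^sub>R Z = ((1::real)+1+1+1) *\<^sub>R Z" by simp
  also have "\<dots> = Z + Z + Z + Z" by (simp only: scaleR_left_distrib scaleR_one)
  finally show ?thesis .
qed

lemma lin4:
  fixes P Q X Y a b :: "'a::real_vector"
  assumes "P + Q = X + Y + a + b" "P + Q = X + Y - a - b" "P - Q = X - Y + a - b" "P - Q = X - Y - a + b"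
  shows "P = X \<and> Q = Y"
proof -
  have "(P+Q)+(P+Q)+(P-Q)+(P-Q) = (X+Y+a+b)+(X+Y-a-b)+(X-Y+a-b)+(X-Y-a+b)"
    by (subst assms(1), subst assms(2), subst assms(3), subst assms(4), rule refl)
  moreover have "(P+Q)+(P+Q)+(P-Q)+(P-Q) = 4 *\<^sub>R P" unfolding four_scale by (simp add: algebra_simps)
  moreover have "(X+Y+a+b)+(X+Y-a-b)+(X-Y+a-b)+(X-Y-a+b) = 4 *\<^sub>R X" unfolding four_scale by (simp add: algebra_simps)
  ultimately have 1: "P = X" by simp
  have "(P+Q)+(P+Q)-(P-Q)-(P-Q) = (X+Y+a+b)+(X+Y-a-b)-(X-Y+a-b)-(X-Y-a+b)"
    by (subst assms(1), subst assms(2), subst assms(3), subst assms(4), rule refl)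
  moreover have "(P+Q)+(P+Q)-(P-Q)-(P-Q) = 4 *\<^sub>R Q" unfolding four_scale by (simp add: algebra_simps)
  moreover have "(X+Y+a+b)+(X+Y-a-b)-(X-Y+a-b)-(X-Y-a+b) = 4 *\<^sub>R Y" unfolding four_scale by (simp add: algebra_simps)
  ultimately have "Q = Y" by simp
  with 1 show ?thesis by simp
qed

definition I0 :: octo where "I0 = (vector [0,1,0,0], 0)"
definition J0 :: octo where "J0 = (vector [0,0,1,0], 0)"

lemma omul_lin:
  "(- x) \<odot> y = - (x \<odot> y)" "x \<odot> (- y) = - (x \<odot> y)" "x \<odot> 0 = 0"
  "x \<odot> (y + z) = x \<odot> y + x \<odot> z" "x \<odot> (y - z) = x \<odot> y - x \<odot> z"
  by (simp_all add: o_eq q_eq omul_fst omul_snd algebra_simps)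

lemma I0I0: "I0 \<odot> (I0 \<odot> w) = - w"
  by (simp add: o_eq q_eq omul_fst omul_snd I0_def)

lemma I0_inj: "I0 \<odot> x = I0 \<odot> y \<Longrightarrow> x = y"
  by (metis I0I0 minus_equation_iff)

lemma units0: "I0 \<in> imag_units" "- I0 \<in> imag_units" "J0 \<in> imag_units" "- J0 \<in> imag_units"
  by (simp_all add: imag_units_iff inner8 inner4 I0_def J0_def)

lemma N0: "(I0, J0) \<in> Nset" "(- I0, J0) \<in> Nset" "(I0, - J0) \<in> Nset" "(- I0, - J0) \<in> Nset"
  using units0 by (simp_all add: Nset_def inner8 inner4 I0_def J0_def)

lemma rot_deriv:
  fixes G :: "real^4 \<Rightarrow> octo" and \<gamma> :: "real \<Rightarrow> real^4"
  assumes "G differentiable at (\<gamma> 0)" "(\<gamma> has_derivative (\<lambda>h. h *\<^sub>R d)) (at 0)"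
    "\<And>t. G (\<gamma> t) = sin t *\<^sub>R a + cos t *\<^sub>R b"
  shows "frechet_derivative G (at (\<gamma> 0)) d = a"
proof -
  let ?G' = "frechet_derivative G (at (\<gamma> 0))"
  have "(G has_derivative ?G') (at (\<gamma> 0))" using assms(1) frechet_derivative_works by blast
  then have "((G \<circ> \<gamma>) has_derivative (?G' \<circ> (\<lambda>h. h *\<^sub>R d))) (at 0)"
    using assms(2) diff_chain_at by blast
  moreover have "G \<circ> \<gamma> = (\<lambda>t. sin t *\<^sub>R a + cos t *\<^sub>R b)" using assms(3) by auto
  ultimately have h1: "((\<lambda>t. sin t *\<^sub>R a + cos t *\<^sub>R b) has_derivative (?G' \<circ> (\<lambda>h. h *\<^sub>R d))) (at 0)"
    by simp
  have h2: "((\<lambda>t. sin t *\<^sub>R a + cos t *\<^sub>R b) has_derivative (\<lambda>h. h *\<^sub>R a)) (at 0)"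
    by (auto intro!: derivative_eq_intros)
  have "(?G' \<circ> (\<lambda>h. h *\<^sub>R d)) = (\<lambda>h. h *\<^sub>R a)"
    by (rule has_derivative_unique[OF h1 h2])
  from fun_cong[OF this, of 1] show ?thesis by simp
qed

definition emb :: "real \<times> real \<Rightarrow> real^4" where
  "emb q = fst q *\<^sub>R axis 1 1 + snd q *\<^sub>R axis 2 1"

lemma emb_c [simp]: "emb q $ 1 = fst q" "emb q $ 2 = snd q" "emb q $ 3 = 0" "emb q $ 4 = 0"
  by (simp_all add: emb_def axis_def)

lemma emb10: "emb (1,0) = axis 1 1" "emb (0,1) = axis 2 1"
  by (simp_all add: emb_def)

lemma emb_deriv: "(emb has_derivative emb) (at p)"
  unfolding emb_def by (auto intro!: derivative_eq_intros)

lemma pd_transfer: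
  fixes G :: "real^4 \<Rightarrow> octo" and H :: "real \<times> real \<Rightarrow> octo"
  assumes "G differentiable at (emb p)" "open D" "p \<in> D" "\<And>q. q \<in> D \<Longrightarrow> H q = G (emb q)"
  shows "frechet_derivative H (at p) h = frechet_derivative G (at (emb p)) (emb h)"
proof -
  let ?G' = "frechet_derivative G (at (emb p))"
  have "(G has_derivative ?G') (at (emb p))" using assms(1) frechet_derivative_works by blast
  then have "((G \<circ> emb) has_derivative (?G' \<circ> emb)) (at p)"
    using emb_deriv diff_chain_at by blast
  then have "(H has_derivative (?G' \<circ> emb)) (at p)"
    by (rule has_derivative_transform_within_open[OF _ assms(2,3)]) (simp add: assms(4))
  then have "frechet_derivative H (at p) = ?G' \<circ> emb" by (metis frechet_derivative_at)
  then show ?thesis by simp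
qed

lemma comp_diff:
  fixes F :: "real^4 \<Rightarrow> octo^4"
  assumes "F differentiable at v"
  shows "(\<lambda>v. F v $ k) differentiable at v"
proof -
  obtain F' where "(F has_derivative F') (at v)" using assms differentiable_def by blast
  then have "((\<lambda>v. F v $ k) has_derivative (\<lambda>h. F' h $ k)) (at v)"
    using bounded_linear.has_derivative[OF bounded_linear_vec_nth] by blast
  then show ?thesis using differentiable_def by blast
qed



lemma dir1:
  fixes D :: "(real \<times> real) set" and f :: "octo \<Rightarrow> octo"
  assumes "open D" 
    and symD: "\<And>x0 x1. (x0, x1) \<in> D \<Longrightarrow> (x0, - x1) \<in> D"
    and "connected (OmegaD D)"
    and sfr: "slice_fueter_regular D f" and sr: "slice_regular D f"
  shows "\<exists>c. \<forall>x\<in>OmegaD D. f x = c"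
proof -
  obtain FF :: "real^4 \<Rightarrow> octo^4" where C1: "C1_on (Eset D) FF"
    and eqv: "\<forall>A\<in>O3. \<forall>v\<in>Eset D. FF (A *v v) = mat_act A (FF v)"
    and rep: "\<forall>v\<in>Eset D. \<forall>(I, J)\<in>Nset.
            f (v$1 *\<^sub>R oone + v$2 *\<^sub>R I + v$3 *\<^sub>R J + v$4 *\<^sub>R (I \<odot> J))
            = FF v $ 1 + I \<odot> (FF v $ 2) + J \<odot> (FF v $ 3) + (I \<odot> J) \<odot> (FF v $ 4)"
    and fu: "\<forall>v\<in>Eset D.
           pd4 (\<lambda>v. FF v $ 1) 1 v - pd4 (\<lambda>v. FF v $ 2) 2 v - pd4 (\<lambda>v. FF v $ 3) 3 v - pd4 (\<lambda>v. FF v $ 4) 4 v = 0"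
    using sfr unfolding slice_fueter_regular_def Let_def by blast
  obtain F1 F2 where stem: "stem_function D F1 F2" and ind: "induces D F1 F2 f"
    and C1': "C1_on D (\<lambda>p. (F1 p, F2 p))"
    and cr: "\<forall>p\<in>D. pd0 F1 p = pd1 F2 p \<and> pd1 F1 p = - pd0 F2 p"
    using sr unfolding slice_regular_def by blast
  have symA: "(x0, \<bar>x1\<bar>) \<in> D" if "(x0, x1) \<in> D" for x0 x1
    using symD[OF that] that by (cases "x1 \<ge> 0") auto
  have embE: "emb p \<in> Eset D" if "p \<in> D" for p
    using symA[of "fst p" "snd p"] that by (simp add: Eset_def)
  have ident: "FF (emb p) $ 1 = F1 p \<and> FF (emb p) $ 2 = F2 p" if pD: "p \<in> D" for p
  proof -
    obtain x0 x1 where p: "p = (x0, x1)" by (cases p)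
    let ?v = "emb p"
    let ?W = "FF ?v"
    have ve: "?v \<in> Eset D" using embE pD by blast
    have pt: "?v$1 *\<^sub>R oone + ?v$2 *\<^sub>R I + ?v$3 *\<^sub>R J + ?v$4 *\<^sub>R K = x0 *\<^sub>R oone + x1 *\<^sub>R I"
      for I J K by (simp add: p)
    have r: "f (x0 *\<^sub>R oone + x1 *\<^sub>R I) = ?W $ 1 + I \<odot> (?W $ 2) + J \<odot> (?W $ 3) + (I \<odot> J) \<odot> (?W $ 4)"
      if "(I, J) \<in> Nset" for I J
    proof -
      have "f (?v$1 *\<^sub>R oone + ?v$2 *\<^sub>R I + ?v$3 *\<^sub>R J + ?v$4 *\<^sub>R (I \<odot> J))
         = ?W $ 1 + I \<odot> (?W $ 2) + J \<odot> (?W $ 3) + (I \<odot> J) \<odot> (?W $ 4)"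
        using rep ve that by blast
      then show ?thesis by (simp only: pt)
    qed
    have s: "f (x0 *\<^sub>R oone + x1 *\<^sub>R I) = F1 p + I \<odot> F2 p" if "I \<in> imag_units" for I
      using ind pD that unfolding induces_def p by blast
    let ?a = "J0 \<odot> (?W $ 3)" and ?b = "(I0 \<odot> J0) \<odot> (?W $ 4)"
    have e1: "F1 p + I0 \<odot> F2 p = ?W $ 1 + I0 \<odot> (?W $ 2) + ?a + ?b"
      using r[OF N0(1)] s[OF units0(1)] by simp
    have e2: "F1 p + I0 \<odot> F2 p = ?W $ 1 + I0 \<odot> (?W $ 2) - ?a - ?b"
      using r[OF N0(3)] s[OF units0(1)] by (simp add: omul_lin)
    have e3: "F1 p - I0 \<odot> F2 p = ?W $ 1 - I0 \<odot> (?W $ 2) + ?a - ?b"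
      using r[OF N0(2)] s[OF units0(2)] by (simp add: omul_lin)
    have e4: "F1 p - I0 \<odot> F2 p = ?W $ 1 - I0 \<odot> (?W $ 2) - ?a + ?b"
      using r[OF N0(4)] s[OF units0(2)] by (simp add: omul_lin)
    from lin4[OF e1 e2 e3 e4] show ?thesis using I0_inj by metis
  qed
  have Fdiff: "FF differentiable at v" if "v \<in> Eset D" for v
    using C1 that unfolding C1_on_def by blast
  have F2z: "F2 p = 0" if pD: "p \<in> D" for p
  proof -
    obtain x0 r where p: "p = (x0, r)" by (cases p)
    let ?v = "emb p"
    let ?W = "FF ?v"
    have ve: "?v \<in> Eset D" using embE pD by blast
    have Gd: "(\<lambda>v. FF v $ k) differentiable at ?v" for k using comp_diff Fdiff ve by blast
    have t1: "pd0 F1 p = pd4 (\<lambda>v. FF v $ 1) 1 ?v"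
      unfolding pd0_def pd4_def
      by (subst pd_transfer[OF Gd \<open>open D\<close> pD, of F1]) (auto simp: ident emb10)
    have t2: "pd1 F2 p = pd4 (\<lambda>v. FF v $ 2) 2 ?v"
      unfolding pd1_def pd4_def
      by (subst pd_transfer[OF Gd \<open>open D\<close> pD, of F2]) (auto simp: ident emb10)
    define g3 :: "real \<Rightarrow> real^4" where "g3 t = x0 *\<^sub>R axis 1 1 + (r * cos t) *\<^sub>R axis 2 1 + (r * sin t) *\<^sub>R axis 3 (1::real)" for t
    define g4 :: "real \<Rightarrow> real^4" where "g4 t = x0 *\<^sub>R axis 1 1 + (r * cos t) *\<^sub>R axis 2 1 + (r * sin t) *\<^sub>R axis 4 (1::real)" for t
    have g30: "g3 0 = ?v" by (simp add: g3_def p emb_def)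
    have g40: "g4 0 = ?v" by (simp add: g4_def p emb_def)
    have g3r: "g3 t = rot3 t *v ?v" for t
      by (simp add: g3_def rot3_def p vec_eq_iff forall_4 matrix_vector_mult_def sum_4 axis_def)
    have g4r: "g4 t = rot4 t *v ?v" for t
      by (simp add: g4_def rot4_def p vec_eq_iff forall_4 matrix_vector_mult_def sum_4 axis_def)
    have g3d: "(g3 has_derivative (\<lambda>h. h *\<^sub>R (r *\<^sub>R axis 3 1))) (at 0)"
      unfolding g3_def by (auto intro!: derivative_eq_intros)
    have g4d: "(g4 has_derivative (\<lambda>h. h *\<^sub>R (r *\<^sub>R axis 4 1))) (at 0)"
      unfolding g4_def by (auto intro!: derivative_eq_intros)
    have m3: "FF (g3 t) $ 3 = sin t *\<^sub>R ?W $ 2 + cos t *\<^sub>R ?W $ 3" for t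
      using eqv rot3_O3 ve unfolding g3r
      by (simp add: mat_act_def sum_4 rot3_def)
    have m4: "FF (g4 t) $ 4 = sin t *\<^sub>R ?W $ 2 + cos t *\<^sub>R ?W $ 4" for t
      using eqv rot4_O3 ve unfolding g4r
      by (simp add: mat_act_def sum_4 rot4_def)
    have d3: "frechet_derivative (\<lambda>v. FF v $ 3) (at ?v) (r *\<^sub>R axis 3 1) = ?W $ 2"
      using rot_deriv[of "\<lambda>v. FF v $ 3" g3, OF _ g3d m3] Gd g30 by simp
    have d4: "frechet_derivative (\<lambda>v. FF v $ 4) (at ?v) (r *\<^sub>R axis 4 1) = ?W $ 2"
      using rot_deriv[of "\<lambda>v. FF v $ 4" g4, OF _ g4d m4] Gd g40 by simp
    have lin: "linear (frechet_derivative (\<lambda>v. FF v $ k) (at ?v))" for k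
      using Gd frechet_derivative_works has_derivative_linear by blast
    have d3': "r *\<^sub>R pd4 (\<lambda>v. FF v $ 3) 3 ?v = F2 p"
      using d3 ident[OF pD] linear_scale[OF lin] unfolding pd4_def by metis
    have d4': "r *\<^sub>R pd4 (\<lambda>v. FF v $ 4) 4 ?v = F2 p"
      using d4 ident[OF pD] linear_scale[OF lin] unfolding pd4_def by metis
    have "pd4 (\<lambda>v. FF v $ 3) 3 ?v + pd4 (\<lambda>v. FF v $ 4) 4 ?v = 0"
      using fu ve cr pD t1 t2 by (auto simp: algebra_simps)
    then have "r *\<^sub>R (pd4 (\<lambda>v. FF v $ 3) 3 ?v + pd4 (\<lambda>v. FF v $ 4) 4 ?v) = 0" by simp
    then have "F2 p + F2 p = 0" using d3' d4' by (simp add: scaleR_right_distrib)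
    then have "(2::real) *\<^sub>R F2 p = 0" by (simp only: scaleR_2)
    then show ?thesis by simp
  qed
  have F1d: "(F1 has_derivative (\<lambda>h. 0)) (at p)" if pD: "p \<in> D" for p
  proof -
    have "(F2 has_derivative (\<lambda>h. 0)) (at p)"
      by (rule has_derivative_transform_within_open[OF has_derivative_const \<open>open D\<close> pD]) (simp add: F2z)
    then have "frechet_derivative F2 (at p) = (\<lambda>h. 0)" by (metis frechet_derivative_at)
    then have z: "pd0 F1 p = 0" "pd1 F1 p = 0" using cr pD unfolding pd0_def pd1_def by auto
    obtain \<Phi> where "((\<lambda>p. (F1 p, F2 p)) has_derivative \<Phi>) (at p)"
      using C1' pD unfolding C1_on_def differentiable_def by blast
    then have "(F1 has_derivative (\<lambda>h. fst (\<Phi> h))) (at p)"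
      using bounded_linear.has_derivative[OF bounded_linear_fst] by fastforce
    then have L: "(F1 has_derivative frechet_derivative F1 (at p)) (at p)"
      using frechet_derivative_works differentiable_def by blast
    then have lin: "linear (frechet_derivative F1 (at p))" using has_derivative_linear by blast
    have "frechet_derivative F1 (at p) h = 0" for h
    proof -
      have "h = fst h *\<^sub>R (1,0) + snd h *\<^sub>R (0,1)" by (simp add: prod_eq_iff)
      then have "frechet_derivative F1 (at p) h = fst h *\<^sub>R frechet_derivative F1 (at p) (1,0) + snd h *\<^sub>R frechet_derivative F1 (at p) (0,1)"
        using linear_add[OF lin] linear_scale[OF lin] by metis
      then show ?thesis using z unfolding pd0_def pd1_def by simp
    qed
    then have "frechet_derivative F1 (at p) = (\<lambda>h. 0)" by auto
    then show ?thesis using L by simp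
  qed
  define \<phi> :: "octo \<Rightarrow> real \<times> real" where "\<phi> x = (fst x $ 1, norm (x - (fst x $ 1) *\<^sub>R oone))" for x
  have phic: "continuous_on UNIV \<phi>" unfolding \<phi>_def by (intro continuous_intros)
  have phi: "\<phi> x \<in> D \<and> f x = F1 (\<phi> x)" if xO: "x \<in> OmegaD D" for x
  proof -
    obtain x0 x1 I where x: "x = x0 *\<^sub>R oone + x1 *\<^sub>R I" and D: "(x0, x1) \<in> D" and I: "I \<in> imag_units"
      using xO unfolding OmegaD_def by blast
    have I1: "fst I $ 1 = 0" "norm I = 1" using I by (auto simp: imag_units_iff norm_eq_sqrt_inner)
    have "\<phi> x = (x0, \<bar>x1\<bar>)" using I1 by (simp add: \<phi>_def x)
    moreover have "F1 (x0, \<bar>x1\<bar>) = F1 (x0, x1)"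
      using stem D unfolding stem_function_def by (cases "x1 \<ge> 0") auto
    moreover have "f x = F1 (x0, x1)"
      using ind D I F2z[OF D] unfolding induces_def x by (metis omul_lin(3) add_0_right)
    ultimately show ?thesis using symA[OF D] by simp
  qed
  show ?thesis
  proof (cases "OmegaD D = {}")
    case True then show ?thesis by auto
  next
    case False
    then obtain x1 where x1: "x1 \<in> OmegaD D" by blast
    let ?C = "connected_component_set D (\<phi> x1)"
    have "connected (\<phi> ` OmegaD D)"
      using connected_continuous_image[OF continuous_on_subset[OF phic] assms(3)] by blast
    then have sub: "\<phi> ` OmegaD D \<subseteq> ?C"
      using connected_component_maximal phi x1 by (metis image_eqI image_subsetI)
    have "F1 constant_on ?C"
    proof (rule has_derivative_zero_connected_constant_on[where K="{}"])
      show "open ?C" using open_connected_component \<open>open D\<close> by blast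
      show "continuous_on ?C F1"
        using F1d connected_component_subset
        by (meson continuous_at_imp_continuous_on has_derivative_continuous subsetD)
      show "\<forall>x\<in>?C - {}. (F1 has_derivative (\<lambda>h. 0)) (at x within ?C)"
        using F1d connected_component_subset has_derivative_at_withinI by blast
    qed auto
    then obtain c where "\<forall>y\<in>?C. F1 y = c" unfolding constant_on_def by blast
    then show ?thesis using sub phi by (metis image_subset_iff)
  qed
qed



lemma pt_in_Omega:
  assumes v: "v \<in> Eset D" and N: "(I, J) \<in> Nset"
  shows "v$1 *\<^sub>R oone + v$2 *\<^sub>R I + v$3 *\<^sub>R J + v$4 *\<^sub>R (I \<odot> J) \<in> OmegaD D"
proof -
  have I: "fst I $ 1 = 0" "inner I I = 1" and J: "fst J $ 1 = 0" "inner J J = 1" and IJ: "inner I J = 0"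
    using N by (auto simp: Nset_def imag_units_iff)
  let ?K = "I \<odot> J"
  have K: "fst ?K $ 1 = 0" "inner ?K ?K = 1" "inner I ?K = 0" "inner J ?K = 0"
    using re_mul[OF I(1) J(1)] IJ norm_mul[of I J] I J inner_I_IJ[OF I(1) J(1)] inner_J_IJ[OF I(1) J(1)]
    by auto
  define w where "w = v$2 *\<^sub>R I + v$3 *\<^sub>R J + v$4 *\<^sub>R ?K"
  have w1: "fst w $ 1 = 0" using I J K by (simp add: w_def)
  have ww: "inner w w = (v$2)\<^sup>2 + (v$3)\<^sup>2 + (v$4)\<^sup>2"
    using I J K IJ by (simp add: w_def inner_add_left inner_add_right inner_commute power2_eq_square algebra_simps)
  define r where "r = norm w"
  have rD: "(v$1, r) \<in> D" using v ww by (simp add: Eset_def r_def norm_eq_sqrt_inner)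
  have pt: "v$1 *\<^sub>R oone + v$2 *\<^sub>R I + v$3 *\<^sub>R J + v$4 *\<^sub>R ?K = v$1 *\<^sub>R oone + w"
    by (simp add: w_def algebra_simps)
  show ?thesis
  proof (cases "w = 0")
    case True
    have "v$1 *\<^sub>R oone + w = v$1 *\<^sub>R oone + r *\<^sub>R I" using True by (simp add: r_def)
    moreover have "I \<in> imag_units" using N by (simp add: Nset_def)
    ultimately show ?thesis unfolding pt OmegaD_def using rD by blast
  next
    case False
    then have r0: "r > 0" by (simp add: r_def)
    define U where "U = (1/r) *\<^sub>R w"
    have U: "U \<in> imag_units"
    proof -
      have "inner U U = (1/r)^2 * inner w w" by (simp add: U_def power2_eq_square)
      also have "\<dots> = 1" using r0 by (simp add: r_def power2_norm_eq_inner[symmetric] power_divide)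
      finally show ?thesis using w1 False by (simp add: imag_units_iff U_def)
    qed
    have "w = r *\<^sub>R U" using r0 by (simp add: U_def)
    then show ?thesis unfolding pt OmegaD_def using rD U by blast
  qed
qed



lemma fd_const [simp]: "frechet_derivative (\<lambda>x. k) (at p) = (\<lambda>h. 0)"
  by (metis frechet_derivative_at has_derivative_const)

lemma C1_const: "C1_on S (\<lambda>x. k)"
  unfolding C1_on_def by simp

lemma O3_col1:
  assumes "A \<in> O3" shows "A$1$1 = 1" "A$2$1 = 0" "A$3$1 = 0" "A$4$1 = 0"
proof -
  have "A *v axis 1 1 = axis 1 1" using assms by (simp add: O3_def)
  then have "\<forall>i. (A *v axis 1 1) $ i = axis 1 (1::real) $ i" by simp
  then show "A$1$1 = 1" "A$2$1 = 0" "A$3$1 = 0" "A$4$1 = 0"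
    by (simp_all add: matrix_vector_mult_def sum_4 axis_def forall_4)
qed

lemma dir2:
  fixes D :: "(real \<times> real) set" and f :: "octo \<Rightarrow> octo"
  assumes c: "\<forall>x\<in>OmegaD D. f x = c"
  shows "slice_fueter_regular D f \<and> slice_regular D f"
proof
  show "slice_regular D f"
    unfolding slice_regular_def
  proof (intro exI conjI)
    show "stem_function D (\<lambda>_. c) (\<lambda>_. 0)" by (simp add: stem_function_def)
    show "induces D (\<lambda>_. c) (\<lambda>_. 0) f"
      unfolding induces_def
    proof (intro allI impI)
      fix x0 x1 I assume "(x0, x1) \<in> D" "I \<in> imag_units"
      then have "x0 *\<^sub>R oone + x1 *\<^sub>R I \<in> OmegaD D" unfolding OmegaD_def by blast
      then show "f (x0 *\<^sub>R oone + x1 *\<^sub>R I) = c + I \<odot> 0" using c by (simp add: omul_lin)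
    qed
    show "C1_on D (\<lambda>p. (c, 0::octo))" by (rule C1_const)
    show "\<forall>p\<in>D. pd0 (\<lambda>_. c) p = pd1 (\<lambda>_. 0::octo) p \<and> pd1 (\<lambda>_. c) p = - pd0 (\<lambda>_. 0::octo) p"
      by (simp add: pd0_def pd1_def)
  qed
  let ?FF = "\<lambda>v::real^4. vector [c, 0, 0, 0] :: octo^4"
  show "slice_fueter_regular D f"
    unfolding slice_fueter_regular_def Let_def
  proof (intro exI[of _ ?FF] conjI ballI)
    show "C1_on (Eset D) ?FF" by (rule C1_const)
    fix A v assume A: "A \<in> O3"
    show "?FF (A *v v) = mat_act A (?FF v)"
      using O3_col1[OF A] by (simp add: mat_act_def vec_eq_iff forall_4 sum_4)
  next
    fix v p assume v: "v \<in> Eset D" and p: "p \<in> Nset"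
    obtain I J where pIJ: "p = (I, J)" by (cases p)
    show "case p of (I, J) \<Rightarrow>
            f (v$1 *\<^sub>R oone + v$2 *\<^sub>R I + v$3 *\<^sub>R J + v$4 *\<^sub>R (I \<odot> J))
            = ?FF v $ 1 + I \<odot> (?FF v $ 2) + J \<odot> (?FF v $ 3) + (I \<odot> J) \<odot> (?FF v $ 4)"
      using pt_in_Omega[OF v p[unfolded pIJ]] c by (simp add: pIJ omul_lin)
  qed (simp_all add: pd4_def)
qed


theorem corollary2p4:
  fixes D :: "(real \<times> real) set" and f :: "octo \<Rightarrow> octo"
  assumes "open D" and "D \<noteq> {}"
    and "\<And>x0 x1. (x0, x1) \<in> D \<Longrightarrow> (x0, - x1) \<in> D"
    and "connected (OmegaD D)"
  shows "(slice_fueter_regular D f \<and> slice_regular D f) \<longleftrightarrow> (\<exists>c. \<forall>x\<in>OmegaD D. f x = c)"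
  using dir1[OF assms(1) assms(3) assms(4)] dir2 by blast

end
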